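(* Let $\alpha>0$, $\beta\in\mathbb{R}$, $\gamma>0$, and let $Q(z)=\sinh[\alpha(z-\beta)]$, so $q(z)=Q'(z)=\alpha\cosh[\alpha(z-\beta)]$, and $p(z)=1/\{1+\exp[-\sinh(\alpha(z-\beta))/\gamma]\}$. Let $H(z)=\gamma\log(1+e^{Q(z)/\gamma})$ and $\mathcal{L}_m(\hat s,s)=H(\hat s)-H(s)-(\hat s-s)H'(s)$. If $\gamma\le1/\sqrt2$, then $\mathcal{L}_m(\hat s,s)$ is convex in $\hat s\in\mathbb{R}$ for every $s\in\mathbb{R}$ (i.e. a convex selective matching loss with this scaling exists).
   Context: $H$ is the $\gamma$-regularized composite Softplus primitive, with link $H'(z)=q(z)p(z)$. *)

theory Defs
  imports "HOL-Analysis.Analysis"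
begin

definition Qf :: "real \<Rightarrow> real \<Rightarrow> real \<Rightarrow> real" where
  "Qf \<alpha> \<beta> z = sinh (\<alpha> * (z - \<beta>))"

definition qf :: "real \<Rightarrow> real \<Rightarrow> real \<Rightarrow> real" where
  "qf \<alpha> \<beta> z = \<alpha> * cosh (\<alpha> * (z - \<beta>))"

definition pf :: "real \<Rightarrow> real \<Rightarrow> real \<Rightarrow> real \<Rightarrow> real" where
  "pf \<alpha> \<beta> \<gamma> z = 1 / (1 + exp (- sinh (\<alpha> * (z - \<beta>)) / \<gamma>))"

definition Hf :: "real \<Rightarrow> real \<Rightarrow> real \<Rightarrow> real \<Rightarrow> real" where
  "Hf \<alpha> \<beta> \<gamma> z = \<gamma> * ln (1 + exp (Qf \<alpha> \<beta> z / \<gamma>))"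

definition Lm :: "real \<Rightarrow> real \<Rightarrow> real \<Rightarrow> real \<Rightarrow> real \<Rightarrow> real" where
  "Lm \<alpha> \<beta> \<gamma> shat s =
     Hf \<alpha> \<beta> \<gamma> shat - Hf \<alpha> \<beta> \<gamma> s - (shat - s) * deriv (Hf \<alpha> \<beta> \<gamma>) s"

end

theory Submission
  imports Defs
begin

lemma key_ineq:
  fixes t g E :: real
  assumes "g > 0" "g \<le> 1" "E > 0" "t < 0 \<Longrightarrow> E \<le> 1"
  shows "t * (1 + E) + (1 + t\<^sup>2) / g \<ge> 0"
proof (cases "t \<ge> 0")
  case True then show ?thesis using assms by (simp add: add_nonneg_nonneg)
next
  case False
  then have "t * (1 + E) \<ge> 2 * t" using assms by (simp add: mult_left_mono_neg)
  moreover have "2 * t + (1 + t\<^sup>2) / g \<ge> 0"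
  proof -
    have "(t + g)\<^sup>2 + (1 - g\<^sup>2) \<ge> 0" using assms
      by (smt (verit) mult_le_one power2_eq_square zero_le_power2)
    then have "2 * t * g + (1 + t\<^sup>2) \<ge> 0" by (simp add: power2_eq_square algebra_simps)
    then have "(2 * t * g + (1 + t\<^sup>2)) / g \<ge> 0" using assms by simp
    then show ?thesis using assms by (simp add: add_divide_distrib)
  qed
  ultimately show ?thesis by linarith
qed

lemma H2_alg0:
  fixes a t c E g D :: real
  assumes "D \<noteq> 0" "g \<noteq> 0"
  shows "a\<^sup>2 * t * (E / D) + a * c * ((E * (c * a / g)) / D\<^sup>2)
    = a\<^sup>2 * E / D\<^sup>2 * (t * D + c\<^sup>2 / g)"
  using assms by (simp add: field_simps power2_eq_square)

lemma H2_alg: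
  fixes a t c E g :: real
  assumes "E > 0" "g > 0"
  shows "a\<^sup>2 * t * (E / (1 + E)) + a * c * ((E * (c * a / g)) / (1 + E)\<^sup>2)
    = a\<^sup>2 * E / (1 + E)\<^sup>2 * (t * (1 + E) + c\<^sup>2 / g)"
  by (rule H2_alg0) (use assms in auto)

theorem corollaryG4:
  fixes \<alpha> \<beta> \<gamma> :: real
  assumes "\<alpha> > 0" and "\<gamma> > 0" and "\<gamma> \<le> 1 / sqrt 2"
  shows "\<forall>s. convex_on UNIV (\<lambda>shat. Lm \<alpha> \<beta> \<gamma> shat s)"
proof
  fix s
  have g1: "\<gamma> \<le> 1"
  proof -
    have "1 / sqrt 2 \<le> (1::real)" by simp
    then show ?thesis using assms(3) by linarith
  qed
  define E where "E z = exp (sinh (\<alpha> * (z - \<beta>)) / \<gamma>)" for z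
  define H1 where "H1 z = \<alpha> * cosh (\<alpha> * (z - \<beta>)) * (E z / (1 + E z))" for z
  define H2 where "H2 z = \<alpha>\<^sup>2 * sinh (\<alpha> * (z - \<beta>)) * (E z / (1 + E z))
       + \<alpha> * cosh (\<alpha> * (z - \<beta>)) * ((E z * (cosh (\<alpha> * (z - \<beta>)) * \<alpha> / \<gamma>)) / (1 + E z)\<^sup>2)" for z
  define d where "d = deriv (Hf \<alpha> \<beta> \<gamma>) s"
  have Epos: "E z > 0" for z by (simp add: E_def)
  have dE: "(E has_real_derivative E z * (cosh (\<alpha> * (z - \<beta>)) * \<alpha> / \<gamma>)) (at z)" for z
    unfolding E_def
    using assms(2) by (auto intro!: derivative_eq_intros simp: field_simps)
  have dH: "(Hf \<alpha> \<beta> \<gamma> has_real_derivative H1 z) (at z)" for z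
  proof -
    have "Hf \<alpha> \<beta> \<gamma> = (\<lambda>z. \<gamma> * ln (1 + E z))"
      by (auto simp: Hf_def Qf_def E_def)
    moreover have "((\<lambda>z. \<gamma> * ln (1 + E z)) has_real_derivative H1 z) (at z)"
    proof -
      have "((\<lambda>z. \<gamma> * ln (1 + E z)) has_real_derivative
             \<gamma> * ((E z * (cosh (\<alpha> * (z - \<beta>)) * \<alpha> / \<gamma>)) / (1 + E z))) (at z)"
        using Epos[of z] by (auto intro!: derivative_eq_intros dE)
      moreover have "\<gamma> * ((E z * (cosh (\<alpha> * (z - \<beta>)) * \<alpha> / \<gamma>)) / (1 + E z)) = H1 z"
        using assms(2) by (simp add: H1_def)
      ultimately show ?thesis by simp
    qed
    ultimately show ?thesis by simp
  qed
  have dH1: "(H1 has_real_derivative H2 z) (at z)" for z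
  proof -
    have dP: "((\<lambda>z. E z / (1 + E z)) has_real_derivative
           (E z * (cosh (\<alpha> * (z - \<beta>)) * \<alpha> / \<gamma>)) / (1 + E z)\<^sup>2) (at z)"
    proof -
      let ?e = "E z * (cosh (\<alpha> * (z - \<beta>)) * \<alpha> / \<gamma>)"
      have ne: "1 + E z \<noteq> 0" using Epos[of z] by simp
      have "((\<lambda>z. E z / (1 + E z)) has_real_derivative
             (?e * (1 + E z) - E z * ?e) / ((1 + E z) * (1 + E z))) (at z)"
        using ne by (auto intro!: derivative_eq_intros dE)
      moreover have "(?e * (1 + E z) - E z * ?e) / ((1 + E z) * (1 + E z)) = ?e / (1 + E z)\<^sup>2"
      proof -
        have "?e * (1 + E z) - E z * ?e = ?e" by (simp add: algebra_simps add_divide_distrib)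
        then show ?thesis by (simp add: power2_eq_square)
      qed
      ultimately show ?thesis by simp
    qed
    moreover have dC: "((\<lambda>z. \<alpha> * cosh (\<alpha> * (z - \<beta>))) has_real_derivative
           \<alpha>\<^sup>2 * sinh (\<alpha> * (z - \<beta>))) (at z)"
      by (auto intro!: derivative_eq_intros simp: power2_eq_square)
    have "((\<lambda>z. \<alpha> * cosh (\<alpha> * (z - \<beta>)) * (E z / (1 + E z))) has_real_derivative
        \<alpha>\<^sup>2 * sinh (\<alpha> * (z - \<beta>)) * (E z / (1 + E z)) +
        (E z * (cosh (\<alpha> * (z - \<beta>)) * \<alpha> / \<gamma>)) / (1 + E z)\<^sup>2 * (\<alpha> * cosh (\<alpha> * (z - \<beta>)))) (at z)"
      by (rule DERIV_mult[OF dC dP])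
    then show ?thesis unfolding H1_def H2_def
      by (simp add: algebra_simps)
  qed
  have H2nn: "H2 z \<ge> 0" for z
  proof -
    define t where "t = sinh (\<alpha> * (z - \<beta>))"
    have c2: "(cosh (\<alpha> * (z - \<beta>)))\<^sup>2 = 1 + t\<^sup>2"
      unfolding t_def using cosh_square_eq[of "\<alpha> * (z - \<beta>)"] by linarith
    have Eq: "E z = exp (t / \<gamma>)" by (simp add: E_def t_def)
    have "t < 0 \<Longrightarrow> E z \<le> 1" unfolding Eq using assms(2)
      by (simp add: divide_nonpos_pos)
    then have K: "t * (1 + E z) + (1 + t\<^sup>2) / \<gamma> \<ge> 0"
      using key_ineq[OF assms(2) g1 Epos[of z]] by blast
    have "H2 z = \<alpha>\<^sup>2 * E z / (1 + E z)\<^sup>2 * (t * (1 + E z) + (1 + t\<^sup>2) / \<gamma>)"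
      unfolding H2_def t_def[symmetric] c2[symmetric] using Epos[of z] assms(2)
      by (intro H2_alg) auto
    moreover have "\<alpha>\<^sup>2 * E z / (1 + E z)\<^sup>2 \<ge> 0" using Epos[of z] by simp
    ultimately show ?thesis using K by (metis mult_nonneg_nonneg)
  qed
  have eqL: "(\<lambda>shat. Lm \<alpha> \<beta> \<gamma> shat s) = (\<lambda>shat. Hf \<alpha> \<beta> \<gamma> shat - Hf \<alpha> \<beta> \<gamma> s - (shat - s) * d)"
    by (simp add: Lm_def d_def)
  show "convex_on UNIV (\<lambda>shat. Lm \<alpha> \<beta> \<gamma> shat s)"
    unfolding eqL
  proof (rule f''_ge0_imp_convex[where f' = "\<lambda>z. H1 z - d" and f'' = H2])
    show "convex (UNIV::real set)" by simp
    fix x :: real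
    show "((\<lambda>shat. Hf \<alpha> \<beta> \<gamma> shat - Hf \<alpha> \<beta> \<gamma> s - (shat - s) * d) has_real_derivative H1 x - d) (at x)"
      by (auto intro!: derivative_eq_intros dH)
    show "((\<lambda>z. H1 z - d) has_real_derivative H2 x) (at x)"
      by (auto intro!: derivative_eq_intros dH1)
    show "0 \<le> H2 x" by (rule H2nn)
  qed
qed

end
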